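(* Let $H$ and $G$ be locally compact, Hausdorff, étale groupoids, let $c : H \to \mathbb{Z}$ be a continuous cocycle, and let $\alpha : G \to G$ be an automorphism. Then the groupoid $H \times_{c,\alpha} G$, endowed with the product topology, is locally compact, Hausdorff and étale. If $G$ and $H$ are second countable, so is $H\times_{c,\alpha}G$. If $G$ and $H$ are ample, so is $H \times_{c,\alpha} G$.
   Context: A cocycle satisfies $c(gh) = c(g)+c(h)$ whenever $s(g) = r(h)$. An automorphism of a topological groupoid is a homeomorphism preserving the groupoid structure. $H \times_{c,\alpha} G$ is the set $H \times G$ with unit space $H^{(0)}\times G^{(0)}$, $r(h,g) = (r(h),r(g))$, $s(h,g) = (s(h), \alpha^{c(h)}(s(g)))$, product $(h_1,g_1)(h_2,g_2) = (h_1h_2, g_1\alpha^{-c(h_1)}(g_2))$ when $s(h_1,g_1) = r(h_2,g_2)$, and inverse $(h,g)^{-1} = (h^{-1},\alpha^{c(h)}(g^{-1}))$. A groupoid is étale if its range map is a local homeomorphism, and ample if it has a basis of compact open bisections. *)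

theory Defs
  imports "HOL-Analysis.Analysis"
begin

text \<open>A topological groupoid on a carrier set of arrows, with unit space a subset
of the arrows.  Only the values on the relevant sets matter.\<close>

record 'a tgroupoid =
  arr   :: "'a set"
  units :: "'a set"
  rng   :: "'a \<Rightarrow> 'a"
  src   :: "'a \<Rightarrow> 'a"
  mult  :: "'a \<Rightarrow> 'a \<Rightarrow> 'a"
  ginv  :: "'a \<Rightarrow> 'a"
  gtop  :: "'a topology"

definition composable :: "'a tgroupoid \<Rightarrow> ('a \<times> 'a) set" where
  "composable G = {(g, h). g \<in> arr G \<and> h \<in> arr G \<and> src G g = rng G h}"

definition groupoid :: "'a tgroupoid \<Rightarrow> bool" where
  "groupoid G \<longleftrightarrow>
     units G \<subseteq> arr G \<and>
     (\<forall>g\<in>arr G. rng G g \<in> units G \<and> src G g \<in> units G) \<and>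
     (\<forall>x\<in>units G. rng G x = x \<and> src G x = x) \<and>
     (\<forall>(g, h)\<in>composable G. mult G g h \<in> arr G \<and>
         rng G (mult G g h) = rng G g \<and> src G (mult G g h) = src G h) \<and>
     (\<forall>g\<in>arr G. \<forall>h\<in>arr G. \<forall>k\<in>arr G. src G g = rng G h \<longrightarrow> src G h = rng G k \<longrightarrow>
         mult G (mult G g h) k = mult G g (mult G h k)) \<and>
     (\<forall>g\<in>arr G. mult G (rng G g) g = g \<and> mult G g (src G g) = g) \<and>
     (\<forall>g\<in>arr G. ginv G g \<in> arr G \<and> rng G (ginv G g) = src G g \<and>
         src G (ginv G g) = rng G g \<and>
         mult G g (ginv G g) = rng G g \<and> mult G (ginv G g) g = src G g)"

definition topological_groupoid :: "'a tgroupoid \<Rightarrow> bool" where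
  "topological_groupoid G \<longleftrightarrow> groupoid G \<and> topspace (gtop G) = arr G \<and>
     continuous_map (subtopology (prod_topology (gtop G) (gtop G)) (composable G)) (gtop G)
        (\<lambda>(g, h). mult G g h) \<and>
     continuous_map (gtop G) (gtop G) (ginv G)"

definition etale :: "'a tgroupoid \<Rightarrow> bool" where
  "etale G \<longleftrightarrow> (\<forall>g\<in>arr G. \<exists>U. openin (gtop G) U \<and> g \<in> U \<and>
      openin (subtopology (gtop G) (units G)) (rng G ` U) \<and>
      homeomorphic_map (subtopology (gtop G) U) (subtopology (gtop G) (rng G ` U)) (rng G))"

definition open_bisection :: "'a tgroupoid \<Rightarrow> 'a set \<Rightarrow> bool" where
  "open_bisection G U \<longleftrightarrow> openin (gtop G) U \<and>
     openin (subtopology (gtop G) (units G)) (rng G ` U) \<and>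
     homeomorphic_map (subtopology (gtop G) U) (subtopology (gtop G) (rng G ` U)) (rng G) \<and>
     openin (subtopology (gtop G) (units G)) (src G ` U) \<and>
     homeomorphic_map (subtopology (gtop G) U) (subtopology (gtop G) (src G ` U)) (src G)"

definition ample :: "'a tgroupoid \<Rightarrow> bool" where
  "ample G \<longleftrightarrow> (\<forall>V. openin (gtop G) V \<longrightarrow> (\<forall>g\<in>V. \<exists>B. open_bisection G B \<and>
      compactin (gtop G) B \<and> g \<in> B \<and> B \<subseteq> V))"

definition cocycle :: "'a tgroupoid \<Rightarrow> ('a \<Rightarrow> int) \<Rightarrow> bool" where
  "cocycle G c \<longleftrightarrow> (\<forall>(g, h)\<in>composable G. c (mult G g h) = c g + c h)"

definition groupoid_automorphism :: "'a tgroupoid \<Rightarrow> ('a \<Rightarrow> 'a) \<Rightarrow> bool" where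
  "groupoid_automorphism G \<alpha> \<longleftrightarrow>
     bij_betw \<alpha> (arr G) (arr G) \<and> homeomorphic_map (gtop G) (gtop G) \<alpha> \<and>
     \<alpha> ` units G = units G \<and>
     (\<forall>g\<in>arr G. rng G (\<alpha> g) = \<alpha> (rng G g) \<and> src G (\<alpha> g) = \<alpha> (src G g) \<and>
        ginv G (\<alpha> g) = \<alpha> (ginv G g)) \<and>
     (\<forall>(g, h)\<in>composable G. \<alpha> (mult G g h) = mult G (\<alpha> g) (\<alpha> h))"

definition apow :: "'a tgroupoid \<Rightarrow> ('a \<Rightarrow> 'a) \<Rightarrow> int \<Rightarrow> 'a \<Rightarrow> 'a" where
  "apow G \<alpha> n = (if 0 \<le> n then \<alpha> ^^ nat n else (inv_into (arr G) \<alpha>) ^^ nat (- n))"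

definition twisted_product ::
  "'h tgroupoid \<Rightarrow> ('h \<Rightarrow> int) \<Rightarrow> ('g \<Rightarrow> 'g) \<Rightarrow> 'g tgroupoid \<Rightarrow> ('h \<times> 'g) tgroupoid" where
  "twisted_product H c \<alpha> G = \<lparr>
     arr = arr H \<times> arr G,
     units = units H \<times> units G,
     rng = (\<lambda>(h, g). (rng H h, rng G g)),
     src = (\<lambda>(h, g). (src H h, apow G \<alpha> (c h) (src G g))),
     mult = (\<lambda>(h1, g1) (h2, g2). (mult H h1 h2, mult G g1 (apow G \<alpha> (- c h1) g2))),
     ginv = (\<lambda>(h, g). (ginv H h, apow G \<alpha> (c h) (ginv G g))),
     gtop = prod_topology (gtop H) (gtop G) \<rparr>"

end

theory Submission
  imports Defs
begin


definition ghom :: "'a tgroupoid \<Rightarrow> ('a \<Rightarrow> 'a) \<Rightarrow> bool" where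
 "ghom G f \<longleftrightarrow> (\<forall>g\<in>arr G. f g \<in> arr G) \<and> (\<forall>u\<in>units G. f u \<in> units G) \<and>
   (\<forall>g\<in>arr G. rng G (f g) = f (rng G g) \<and> src G (f g) = f (src G g) \<and> ginv G (f g) = f (ginv G g)) \<and>
   (\<forall>g\<in>arr G. \<forall>h\<in>arr G. src G g = rng G h \<longrightarrow> f (mult G g h) = mult G (f g) (f h)) \<and>
   continuous_map (gtop G) (gtop G) f"

lemma ghom_id: "topspace (gtop G) = arr G \<Longrightarrow> ghom G id"
  by (simp add: ghom_def)

lemma ghom_comp: "ghom G f \<Longrightarrow> ghom G g \<Longrightarrow> ghom G (f \<circ> g)"
  unfolding ghom_def by (auto intro: continuous_map_compose)

lemma ghom_pow: "topspace (gtop G) = arr G \<Longrightarrow> ghom G f \<Longrightarrow> ghom G (f ^^ n)"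
  by (induction n) (auto simp: ghom_id ghom_comp)

locale tw =
  fixes G :: "'g tgroupoid" and \<alpha> :: "'g \<Rightarrow> 'g"
  assumes tg: "topological_groupoid G" and aut: "groupoid_automorphism G \<alpha>"
begin

abbreviation "\<beta> \<equiv> inv_into (arr G) \<alpha>"
abbreviation "A \<equiv> apow G \<alpha>"

lemma gG: "groupoid G" using tg by (simp add: topological_groupoid_def)
lemma top: "topspace (gtop G) = arr G" using tg by (simp add: topological_groupoid_def)

lemma bij: "bij_betw \<alpha> (arr G) (arr G)" using aut by (simp add: groupoid_automorphism_def)

lemma a_arr: "g \<in> arr G \<Longrightarrow> \<alpha> g \<in> arr G" using bij by (meson bij_betwE)
lemma b_arr: "g \<in> arr G \<Longrightarrow> \<beta> g \<in> arr G"
  using bij by (metis bij_betw_def inv_into_into)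
lemma ab: "g \<in> arr G \<Longrightarrow> \<alpha> (\<beta> g) = g"
  using bij by (metis bij_betw_def f_inv_into_f)
lemma ba: "g \<in> arr G \<Longrightarrow> \<beta> (\<alpha> g) = g"
  using bij by (metis bij_betw_def inv_into_f_f)

lemma ghom_a: "ghom G \<alpha>"
  using aut unfolding ghom_def groupoid_automorphism_def composable_def
  by (auto simp: a_arr homeomorphic_imp_continuous_map)

lemma units_sub: "units G \<subseteq> arr G" using gG by (simp add: groupoid_def)

lemma ghom_b: "ghom G \<beta>"
proof -
  have au: "\<alpha> ` units G = units G" using aut by (simp add: groupoid_automorphism_def)
  have gr: "\<forall>g\<in>arr G. rng G g \<in> arr G \<and> src G g \<in> arr G \<and> ginv G g \<in> arr G"
    using gG units_sub unfolding groupoid_def by blast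
  have ma: "\<forall>g\<in>arr G. \<forall>h\<in>arr G. src G g = rng G h \<longrightarrow> mult G g h \<in> arr G"
    using gG unfolding groupoid_def composable_def by blast
  have ha: "\<forall>g\<in>arr G. rng G (\<alpha> g) = \<alpha> (rng G g) \<and> src G (\<alpha> g) = \<alpha> (src G g) \<and> ginv G (\<alpha> g) = \<alpha> (ginv G g)"
   "\<forall>g\<in>arr G. \<forall>h\<in>arr G. src G g = rng G h \<longrightarrow> \<alpha> (mult G g h) = mult G (\<alpha> g) (\<alpha> h)"
    using ghom_a unfolding ghom_def by auto
  have inj: "\<And>x y. x \<in> arr G \<Longrightarrow> y \<in> arr G \<Longrightarrow> \<alpha> x = \<alpha> y \<Longrightarrow> x = y" by (metis ba)
  have 1: "\<forall>u\<in>units G. \<beta> u \<in> units G"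
  proof
    fix u assume "u \<in> units G"
    then obtain v where "v \<in> units G" "u = \<alpha> v" using au by blast
    then show "\<beta> u \<in> units G" using ba units_sub by auto
  qed
  have 2: "\<forall>g\<in>arr G. rng G (\<beta> g) = \<beta> (rng G g) \<and> src G (\<beta> g) = \<beta> (src G g) \<and> ginv G (\<beta> g) = \<beta> (ginv G g)"
  proof
    fix g assume g: "g \<in> arr G"
    have e: "\<alpha> (\<beta> g) = g" "\<beta> g \<in> arr G" using g ab b_arr by auto
    have "\<alpha> (rng G (\<beta> g)) = \<alpha> (\<beta> (rng G g))" using ha(1) e gr g ab by metis
    moreover have "\<alpha> (src G (\<beta> g)) = \<alpha> (\<beta> (src G g))" using ha(1) e gr g ab by metis
    moreover have "\<alpha> (ginv G (\<beta> g)) = \<alpha> (\<beta> (ginv G g))" using ha(1) e gr g ab by metis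
    ultimately show "rng G (\<beta> g) = \<beta> (rng G g) \<and> src G (\<beta> g) = \<beta> (src G g) \<and> ginv G (\<beta> g) = \<beta> (ginv G g)"
      using inj e gr g b_arr by meson
  qed
  have 3: "\<forall>g\<in>arr G. \<forall>h\<in>arr G. src G g = rng G h \<longrightarrow> \<beta> (mult G g h) = mult G (\<beta> g) (\<beta> h)"
  proof (intro ballI impI)
    fix g h assume gh: "g \<in> arr G" "h \<in> arr G" "src G g = rng G h"
    then have "src G (\<beta> g) = rng G (\<beta> h)" using 2 by simp
    then have "\<alpha> (mult G (\<beta> g) (\<beta> h)) = mult G g h" using ha(2) gh b_arr ab by simp
    then show "\<beta> (mult G g h) = mult G (\<beta> g) (\<beta> h)"
      by (metis \<open>src G (\<beta> g) = rng G (\<beta> h)\<close> b_arr ba gh(1,2) ma)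
  qed
  have 4: "continuous_map (gtop G) (gtop G) \<beta>"
  proof -
    have "homeomorphic_map (gtop G) (gtop G) \<alpha>" using aut by (simp add: groupoid_automorphism_def)
    then obtain k where k: "homeomorphic_maps (gtop G) (gtop G) \<alpha> k" using homeomorphic_map_maps by blast
    then have "continuous_map (gtop G) (gtop G) k" "\<forall>x\<in>arr G. k (\<alpha> x) = x"
      using top by (auto simp: homeomorphic_maps_def)
    moreover have "\<And>y. y \<in> topspace (gtop G) \<Longrightarrow> k y = \<beta> y"
      by (metis ab b_arr calculation(2) top)
    ultimately show ?thesis using continuous_map_eq by blast
  qed
  show ?thesis unfolding ghom_def using 1 2 3 4 b_arr by blast
qed

lemma ghom_A: "ghom G (A n)"
  unfolding apow_def using ghom_pow[OF top] ghom_a ghom_b by auto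

lemma A_arr[simp]: "g \<in> arr G \<Longrightarrow> A n g \<in> arr G"
  and A_units: "u \<in> units G \<Longrightarrow> A n u \<in> units G"
  and A_rng[simp]: "g \<in> arr G \<Longrightarrow> rng G (A n g) = A n (rng G g)"
  and A_src[simp]: "g \<in> arr G \<Longrightarrow> src G (A n g) = A n (src G g)"
  and A_inv[simp]: "g \<in> arr G \<Longrightarrow> ginv G (A n g) = A n (ginv G g)"
  and A_mult: "g \<in> arr G \<Longrightarrow> h \<in> arr G \<Longrightarrow> src G g = rng G h \<Longrightarrow> A n (mult G g h) = mult G (A n g) (A n h)"
  and A_cont: "continuous_map (gtop G) (gtop G) (A n)"
  using ghom_A[of n] unfolding ghom_def by auto

lemma A0[simp]: "A 0 = id" by (simp add: apow_def)

lemma A_succ: assumes "g \<in> arr G" shows "A (n + 1) g = \<alpha> (A n g)"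
proof (cases "n \<ge> 0")
  case True
  then have "nat (n+1) = Suc (nat n)" by simp
  then show ?thesis using True by (simp add: apow_def)
next
  case False
  then have "nat (-n) > 0" by simp
  then obtain k where k: "nat (-n) = Suc k" using gr0_conv_Suc by blast
  have ar: "(\<beta> ^^ k) g \<in> arr G" using ghom_pow[OF top ghom_b] \<open>g \<in> arr G\<close> unfolding ghom_def by blast
  show ?thesis
  proof (cases "n + 1 \<ge> 0")
    case True
    then have "n = -1" using False by simp
    then show ?thesis using \<open>g \<in> arr G\<close> by (simp add: apow_def ab)
  next
    case F2: False
    then have "nat (-(n+1)) = k" using k by simp
    then show ?thesis using False F2 k ar by (simp add: apow_def ab)
  qed
qed

lemma A_pred: "g \<in> arr G \<Longrightarrow> A (n - 1) g = \<beta> (A n g)"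
  using A_succ[of g "n - 1"] by (simp add: ba)

lemma A_add[simp]: "g \<in> arr G \<Longrightarrow> A m (A n g) = A (m + n) g"
proof (induction m rule: int_induct[where k=0])
  case base then show ?case by simp
next
  case (step1 i) then show ?case
  proof -
    have "A (i + 1) (A n g) = \<alpha> (A i (A n g))" using step1 A_succ A_arr by blast
    also have "\<dots> = \<alpha> (A (i + n) g)" using step1 by simp
    also have "\<dots> = A (i + n + 1) g" using step1 A_succ by simp
    finally show ?thesis by (simp add: ac_simps)
  qed
next
  case (step2 i) then show ?case
  proof -
    have "A (i - 1) (A n g) = \<beta> (A i (A n g))" using step2 A_pred A_arr by blast
    also have "\<dots> = \<beta> (A (i + n) g)" using step2 by simp
    also have "\<dots> = A (i + n - 1) g" using step2 A_pred by simp
    finally show ?thesis by (simp add: algebra_simps)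
  qed
qed

lemma A_cancel[simp]: "g \<in> arr G \<Longrightarrow> A (- n) (A n g) = g" "g \<in> arr G \<Longrightarrow> A n (A (-n) g) = g"
  by simp_all

end


context fixes X :: "'a tgroupoid" assumes gX: "groupoid X"
begin
lemma gp_units_arr: "u \<in> units X \<Longrightarrow> u \<in> arr X" using gX by (auto simp: groupoid_def)
lemma gp_rng_units: "g \<in> arr X \<Longrightarrow> rng X g \<in> units X" using gX by (auto simp: groupoid_def)
lemma gp_src_units: "g \<in> arr X \<Longrightarrow> src X g \<in> units X" using gX by (auto simp: groupoid_def)
lemma gp_rng_arr: "g \<in> arr X \<Longrightarrow> rng X g \<in> arr X" using gp_rng_units gp_units_arr by blast
lemma gp_src_arr: "g \<in> arr X \<Longrightarrow> src X g \<in> arr X" using gp_src_units gp_units_arr by blast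
lemma gp_ru: "x \<in> units X \<Longrightarrow> rng X x = x" using gX by (auto simp: groupoid_def)
lemma gp_su: "x \<in> units X \<Longrightarrow> src X x = x" using gX by (auto simp: groupoid_def)
lemma gp_mult: "g \<in> arr X \<Longrightarrow> h \<in> arr X \<Longrightarrow> src X g = rng X h \<Longrightarrow>
   mult X g h \<in> arr X \<and> rng X (mult X g h) = rng X g \<and> src X (mult X g h) = src X h"
  using gX unfolding groupoid_def composable_def by blast
lemma gp_assoc: "g \<in> arr X \<Longrightarrow> h \<in> arr X \<Longrightarrow> k \<in> arr X \<Longrightarrow> src X g = rng X h \<Longrightarrow> src X h = rng X k \<Longrightarrow>
         mult X (mult X g h) k = mult X g (mult X h k)"
  using gX unfolding groupoid_def by blast
lemma gp_idl: "g \<in> arr X \<Longrightarrow> mult X (rng X g) g = g" using gX by (auto simp: groupoid_def)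
lemma gp_idr: "g \<in> arr X \<Longrightarrow> mult X g (src X g) = g" using gX by (auto simp: groupoid_def)
lemma gp_inv: "g \<in> arr X \<Longrightarrow> ginv X g \<in> arr X \<and> rng X (ginv X g) = src X g \<and>
         src X (ginv X g) = rng X g \<and>
         mult X g (ginv X g) = rng X g \<and> mult X (ginv X g) g = src X g"
  using gX by (auto simp: groupoid_def)
end

locale tw2 = tw G \<alpha> for G :: "'g tgroupoid" and \<alpha> +
  fixes H :: "'h tgroupoid" and c :: "'h \<Rightarrow> int"
  assumes tH: "topological_groupoid H" and coc: "cocycle H c"
begin

lemma gH: "groupoid H" using tH by (simp add: topological_groupoid_def)
lemma topH: "topspace (gtop H) = arr H" using tH by (simp add: topological_groupoid_def)

lemma c_mult: "h1 \<in> arr H \<Longrightarrow> h2 \<in> arr H \<Longrightarrow> src H h1 = rng H h2 \<Longrightarrow> c (mult H h1 h2) = c h1 + c h2"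
  using coc by (auto simp: cocycle_def composable_def)

lemma c_unit: assumes "x \<in> units H" shows "c x = 0"
proof -
  have x: "x \<in> arr H" "rng H x = x" "src H x = x" using gp_units_arr[OF gH assms] gp_ru[OF gH assms] gp_su[OF gH assms] by auto
  have "mult H x x = x" using gp_idl[OF gH x(1)] x by simp
  then have "c x = c x + c x" using c_mult[of x x] x by simp
  then show ?thesis by simp
qed

lemma c_inv: assumes "h \<in> arr H" shows "c (ginv H h) = - c h"
proof -
  have i: "ginv H h \<in> arr H" "rng H (ginv H h) = src H h" "mult H h (ginv H h) = rng H h"
    using gp_inv[OF gH assms] by auto
  have "c (rng H h) = 0" using c_unit gp_rng_units[OF gH assms] by blast
  then have "c h + c (ginv H h) = 0" using c_mult[of h "ginv H h"] i assms by simp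
  then show ?thesis by simp
qed

abbreviation "T \<equiv> twisted_product H c \<alpha> G"

lemma T_simps:
  "arr T = arr H \<times> arr G" "units T = units H \<times> units G"
  "rng T (h, g) = (rng H h, rng G g)"
  "src T (h, g) = (src H h, A (c h) (src G g))"
  "mult T (h1, g1) (h2, g2) = (mult H h1 h2, mult G g1 (A (- c h1) g2))"
  "ginv T (h, g) = (ginv H h, A (c h) (ginv G g))"
  "gtop T = prod_topology (gtop H) (gtop G)"
  by (simp_all add: twisted_product_def)

lemma groupoid_T: "groupoid T"
proof -
  note gH' = gp_units_arr[OF gH] gp_rng_units[OF gH] gp_src_units[OF gH] gp_rng_arr[OF gH] gp_src_arr[OF gH]
     gp_ru[OF gH] gp_su[OF gH]
  note gG' = gp_units_arr[OF gG] gp_rng_units[OF gG] gp_src_units[OF gG] gp_rng_arr[OF gG] gp_src_arr[OF gG]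
     gp_ru[OF gG] gp_su[OF gG]
  have 1: "units T \<subseteq> arr T" using gH' gG' by (auto simp: T_simps)
  have 2: "\<forall>x\<in>arr T. rng T x \<in> units T \<and> src T x \<in> units T"
    using gH' gG' A_units by (auto simp: T_simps)
  have 3: "\<forall>x\<in>units T. rng T x = x \<and> src T x = x"
    using gH' gG' c_unit by (auto simp: T_simps)
  have 4: "\<forall>(x, y)\<in>composable T. mult T x y \<in> arr T \<and> rng T (mult T x y) = rng T x \<and> src T (mult T x y) = src T y"
  proof (clarsimp simp: composable_def T_simps)
    fix h1 g1 h2 g2 assume a: "h1 \<in> arr H" "g1 \<in> arr G" "h2 \<in> arr H" "g2 \<in> arr G"
      "src H h1 = rng H h2" "A (c h1) (src G g1) = rng G g2"
    have s: "src G g1 = rng G (A (- c h1) g2)" using a A_cancel[of "src G g1" "c h1"] gG' by simp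
    have m: "mult G g1 (A (- c h1) g2) \<in> arr G \<and> rng G (mult G g1 (A (- c h1) g2)) = rng G g1 \<and>
        src G (mult G g1 (A (- c h1) g2)) = src G (A (- c h1) g2)"
      using gp_mult[OF gG a(2) _ s] a by simp
    show "mult H h1 h2 \<in> arr H \<and> mult G g1 (A (- c h1) g2) \<in> arr G \<and>
       rng H (mult H h1 h2) = rng H h1 \<and> rng G (mult G g1 (A (- c h1) g2)) = rng G g1 \<and>
       src H (mult H h1 h2) = src H h2 \<and> A (c (mult H h1 h2)) (src G (mult G g1 (A (- c h1) g2))) = A (c h2) (src G g2)"
      using m gp_mult[OF gH a(1,3,5)] c_mult[OF a(1,3,5)] a gG' by simp
  qed
  have 5: "\<forall>x\<in>arr T. \<forall>y\<in>arr T. \<forall>z\<in>arr T. src T x = rng T y \<longrightarrow> src T y = rng T z \<longrightarrow>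
         mult T (mult T x y) z = mult T x (mult T y z)"
  proof (clarsimp simp: T_simps)
    fix h1 g1 h2 g2 h3 g3 assume a: "h1 \<in> arr H" "g1 \<in> arr G" "h2 \<in> arr H" "g2 \<in> arr G"
      "h3 \<in> arr H" "g3 \<in> arr G"
      "src H h1 = rng H h2" "A (c h1) (src G g1) = rng G g2"
      "src H h2 = rng H h3" "A (c h2) (src G g2) = rng G g3"
    let ?a = "A (- c h1) g2" and ?b = "A (- c h1 - c h2) g3" and ?d = "A (- c h2) g3"
    have s1: "src G g1 = rng G ?a" using a A_cancel[of "src G g1" "c h1"] gG' by simp
    have s2: "src G ?a = rng G ?b" using a(4) a(6) gp_src_arr[OF gG a(4)] by (simp flip: a(10) add: algebra_simps)
    have s3: "src G g2 = rng G ?d" using a A_cancel[of "src G g2" "c h2"] gG' by simp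
    have m1: "mult G g1 ?a \<in> arr G" "src G (mult G g1 ?a) = src G ?a" using gp_mult[OF gG a(2) _ s1] a by auto
    have e1: "mult G (mult G g1 ?a) (A (- c (mult H h1 h2)) g3) = mult G g1 (mult G ?a ?b)"
      using gp_assoc[OF gG a(2) _ _ s1 s2] a c_mult[OF a(1,3,7)] by (simp add: algebra_simps)
    have e2: "A (- c h1) (mult G g2 ?d) = mult G ?a ?b"
      using A_mult[OF a(4) _ s3] a by simp
    show "mult H (mult H h1 h2) h3 = mult H h1 (mult H h2 h3) \<and>
       mult G (mult G g1 (A (- c h1) g2)) (A (- c (mult H h1 h2)) g3) =
       mult G g1 (A (- c h1) (mult G g2 (A (- c h2) g3)))"
      using gp_assoc[OF gH a(1,3,5,7,9)] e1 e2 by simp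
  qed
  have 6: "\<forall>x\<in>arr T. mult T (rng T x) x = x \<and> mult T x (src T x) = x"
  proof (clarsimp simp: T_simps)
    fix h g assume a: "h \<in> arr H" "g \<in> arr G"
    have "c (rng H h) = 0" using c_unit gH' a by blast
    then show "mult H (rng H h) h = h \<and> mult G (rng G g) (A (- c (rng H h)) g) = g \<and>
       mult H h (src H h) = h \<and> mult G g (A (- c h) (A (c h) (src G g))) = g"
      using a gG' gp_idl[OF gH] gp_idr[OF gH] gp_idl[OF gG] gp_idr[OF gG] by simp
  qed
  have 7: "\<forall>x\<in>arr T. ginv T x \<in> arr T \<and> rng T (ginv T x) = src T x \<and> src T (ginv T x) = rng T x \<and>
         mult T x (ginv T x) = rng T x \<and> mult T (ginv T x) x = src T x"
  proof (clarsimp simp: T_simps)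
    fix h g assume a: "h \<in> arr H" "g \<in> arr G"
    have ci: "c (ginv H h) = - c h" using c_inv a by blast
    have iH: "ginv H h \<in> arr H" "rng H (ginv H h) = src H h" "src H (ginv H h) = rng H h"
         "mult H h (ginv H h) = rng H h" "mult H (ginv H h) h = src H h" using gp_inv[OF gH a(1)] by auto
    have iG: "ginv G g \<in> arr G" "rng G (ginv G g) = src G g" "src G (ginv G g) = rng G g"
         "mult G g (ginv G g) = rng G g" "mult G (ginv G g) g = src G g" using gp_inv[OF gG a(2)] by auto
    have m2: "mult G (A (c h) (ginv G g)) (A (c h) g) = A (c h) (src G g)"
      using A_mult[of "ginv G g" g "c h"] iG a by simp
    show "ginv H h \<in> arr H \<and> A (c h) (ginv G g) \<in> arr G \<and>
       rng H (ginv H h) = src H h \<and> rng G (A (c h) (ginv G g)) = A (c h) (src G g) \<and>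
       src H (ginv H h) = rng H h \<and> A (c (ginv H h)) (src G (A (c h) (ginv G g))) = rng G g \<and>
       mult H h (ginv H h) = rng H h \<and> mult G g (A (- c h) (A (c h) (ginv G g))) = rng G g \<and>
       mult H (ginv H h) h = src H h \<and> mult G (A (c h) (ginv G g)) (A (- c (ginv H h)) g) = A (c h) (src G g)"
      using iH iG ci m2 a gG' by simp
  qed
  show ?thesis unfolding groupoid_def using 1 2 3 4 5 6 7 by blast
qed

end



lemma cont_piecewise:
  assumes k: "continuous_map X (discrete_topology UNIV) k" and f: "\<And>n. continuous_map X Y (f n)"
  shows "continuous_map X Y (\<lambda>x. f (k x) x)"
  unfolding continuous_map
proof (intro conjI allI impI)
  show "(\<lambda>x. f (k x) x) ` topspace X \<subseteq> topspace Y"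
    using f by (auto simp: continuous_map_def)
  fix U assume U: "openin Y U"
  have "{x \<in> topspace X. f (k x) x \<in> U} = (\<Union>n. {x \<in> topspace X. k x \<in> {n}} \<inter> {x \<in> topspace X. f n x \<in> U})"
    by auto
  moreover have "openin X ({x \<in> topspace X. k x \<in> {n}} \<inter> {x \<in> topspace X. f n x \<in> U})" for n
    by (rule openin_Int[OF openin_continuous_map_preimage[OF k] openin_continuous_map_preimage[OF f U]]) simp
  then have "openin X (\<Union>n. {x \<in> topspace X. k x \<in> {n}} \<inter> {x \<in> topspace X. f n x \<in> U})"
    by (intro openin_Union) blast
  ultimately show "openin X {x \<in> topspace X. f (k x) x \<in> U}"
    by simp
qed


lemma homeo_prod:
  assumes "homeomorphic_map X X' f" "homeomorphic_map Y Y' g"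
  shows "homeomorphic_map (prod_topology X Y) (prod_topology X' Y') (\<lambda>(x,y). (f x, g y))"
proof -
  obtain f' g' where "homeomorphic_maps X X' f f'" "homeomorphic_maps Y Y' g g'"
    using assms homeomorphic_map_maps by metis
  then have "homeomorphic_maps (prod_topology X Y) (prod_topology X' Y') (\<lambda>(x,y). (f x, g y)) (\<lambda>(x,y). (f' x, g' y))"
    by (simp add: homeomorphic_maps_prod)
  then show ?thesis using homeomorphic_map_maps by blast
qed


lemma t1: "W \<in> (\<lambda>(U, V). U \<times> V) ` (B1 \<times> B2) \<Longrightarrow> \<exists>U V. U \<in> B1 \<and> V \<in> B2 \<and> W = U \<times> V"
  by blast
lemma t2: "openin (prod_topology X Y) S \<Longrightarrow> (x,y) \<in> S \<Longrightarrow> \<exists>U V. openin X U \<and> openin Y V \<and> x \<in> U \<and> y \<in> V \<and> U \<times> V \<subseteq> S"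
  by (simp only: openin_prod_topology_alt)
lemma t3: "U' \<in> B1 \<Longrightarrow> V' \<in> B2 \<Longrightarrow> U' \<times> V' \<in> (\<lambda>(U, V). U \<times> V) ` (B1 \<times> B2)"
  by (intro image_eqI[of _ _ "(U', V')"]) simp_all

lemma second_countable_prod:
  assumes "second_countable X" "second_countable Y"
  shows "second_countable (prod_topology X Y)"
proof -
  obtain B1 where B1: "countable B1" "\<forall>V\<in>B1. openin X V" "\<forall>U x. openin X U \<and> x \<in> U \<longrightarrow> (\<exists>V\<in>B1. x \<in> V \<and> V \<subseteq> U)"
    using assms(1) unfolding second_countable_def by blast
  obtain B2 where B2: "countable B2" "\<forall>V\<in>B2. openin Y V" "\<forall>U x. openin Y U \<and> x \<in> U \<longrightarrow> (\<exists>V\<in>B2. x \<in> V \<and> V \<subseteq> U)"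
    using assms(2) unfolding second_countable_def by blast
  define B where "B = (\<lambda>(U, V). U \<times> V) ` (B1 \<times> B2)"
  have cB: "countable B" using B1(1) B2(1) by (simp add: B_def)
  have oB: "\<forall>W\<in>B. openin (prod_topology X Y) W"
  proof
    fix W assume "W \<in> B"
    then obtain U V where "U \<in> B1" "V \<in> B2" "W = U \<times> V" using t1 unfolding B_def by blast
    then show "openin (prod_topology X Y) W" using B1(2) B2(2) by (simp add: openin_prod_Times_iff)
  qed
  have bB: "\<exists>W\<in>B. z \<in> W \<and> W \<subseteq> S" if hS: "openin (prod_topology X Y) S" "z \<in> S" for S z
  proof -
    obtain x y where z: "z = (x, y)" by (cases z) blast
    obtain U V where UV: "openin X U" "openin Y V" "x \<in> U" "y \<in> V" "U \<times> V \<subseteq> S"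
      using t2[OF hS(1), of x y] hS(2) unfolding z by blast
    obtain U' where U': "U' \<in> B1" "x \<in> U'" "U' \<subseteq> U" using B1(3) UV(1,3) by meson
    obtain V' where V': "V' \<in> B2" "y \<in> V'" "V' \<subseteq> V" using B2(3) UV(2,4) by meson
    have m: "U' \<times> V' \<in> B" unfolding B_def by (rule t3[OF U'(1) V'(1)])
    have zz: "z \<in> U' \<times> V'" using z U'(2) V'(2) by simp
    have s1: "U' \<times> V' \<subseteq> U \<times> V" using U'(3) V'(3) by (rule Sigma_mono)
    have ss: "U' \<times> V' \<subseteq> S" using s1 UV(5) by (rule subset_trans)
    show ?thesis
    proof (rule bexI[OF _ m])
      show "z \<in> U' \<times> V' \<and> U' \<times> V' \<subseteq> S" using zz ss by (rule conjI)
    qed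
  qed
  show ?thesis unfolding second_countable_def
  proof (intro exI[of _ B] conjI allI impI)
    show "countable B" by (rule cB)
    show "\<forall>V\<in>B. openin (prod_topology X Y) V" by (rule oB)
    fix U x assume "openin (prod_topology X Y) U \<and> x \<in> U"
    then show "\<exists>V\<in>B. x \<in> V \<and> V \<subseteq> U" using bB by blast
  qed
qed

lemma img_prod: "(\<lambda>(x,y). (f x, g y)) ` (S \<times> T) = f ` S \<times> g ` T"
  by (simp add: image_paired_Times)

lemma piece_prod:
  assumes "openin (subtopology X WX) (f ` S1)" "homeomorphic_map (subtopology X S1) (subtopology X (f ` S1)) f"
    and "openin (subtopology Y WY) (g ` S2)" "homeomorphic_map (subtopology Y S2) (subtopology Y (g ` S2)) g"
  shows "openin (subtopology (prod_topology X Y) (WX \<times> WY)) ((\<lambda>(x,y). (f x, g y)) ` (S1 \<times> S2))"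
    "homeomorphic_map (subtopology (prod_topology X Y) (S1 \<times> S2))
        (subtopology (prod_topology X Y) ((\<lambda>(x,y). (f x, g y)) ` (S1 \<times> S2))) (\<lambda>(x,y). (f x, g y))"
  using assms by (simp_all add: img_prod subtopology_Times openin_prod_Times_iff homeo_prod)

context tw
begin

lemma A_homeo: "homeomorphic_map (gtop G) (gtop G) (A n)"
proof -
  have "homeomorphic_maps (gtop G) (gtop G) (A n) (A (- n))"
    unfolding homeomorphic_maps_def using A_cont top by simp
  then show ?thesis by (rule homeomorphic_maps_imp_map)
qed

lemma A_sub_homeo: assumes "S \<subseteq> arr G"
  shows "homeomorphic_map (subtopology (gtop G) S) (subtopology (gtop G) (A n ` S)) (A n)"
proof (rule homeomorphic_map_subtopologies[OF A_homeo])
  show "A n ` (topspace (gtop G) \<inter> S) = topspace (gtop G) \<inter> A n ` S"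
    using assms top by auto
qed

lemma A_open_units: assumes "openin (subtopology (gtop G) (units G)) S"
  shows "openin (subtopology (gtop G) (units G)) (A n ` S)"
proof -
  obtain Q where Q: "openin (gtop G) Q" "S = Q \<inter> units G" using assms openin_subtopology by metis
  have Qa: "Q \<subseteq> arr G" using openin_subset[OF Q(1)] top by simp
  have "A n ` (Q \<inter> units G) = A n ` Q \<inter> units G"
  proof
    show "A n ` (Q \<inter> units G) \<subseteq> A n ` Q \<inter> units G" using A_units by auto
    show "A n ` Q \<inter> units G \<subseteq> A n ` (Q \<inter> units G)"
    proof
      fix y assume y: "y \<in> A n ` Q \<inter> units G"
      then obtain w where w: "w \<in> Q" "y = A n w" by blast
      have "w = A (- n) y" using w Qa by auto
      then have "w \<in> units G" using A_units y by blast
      then show "y \<in> A n ` (Q \<inter> units G)" using w by blast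
    qed
  qed
  moreover have "openin (gtop G) (A n ` Q)"
    using homeomorphic_imp_open_map[OF A_homeo] Q(1) unfolding open_map_def by blast
  ultimately show ?thesis using Q(2) openin_subtopology by blast
qed

end

context tw2
begin

abbreviation "P \<equiv> prod_topology (gtop H) (gtop G)"

lemma rng_T: "rng T = (\<lambda>(h, g). (rng H h, rng G g))" by (simp add: twisted_product_def)

lemma cont_c: "continuous_map (gtop H) (discrete_topology UNIV) c"
  if "continuous_map (gtop H) (discrete_topology UNIV) c" using that .

lemma top_T: "topological_groupoid T"
  if cc: "continuous_map (gtop H) (discrete_topology UNIV) c"
proof -
  have mH: "continuous_map (subtopology (prod_topology (gtop H) (gtop H)) (composable H)) (gtop H) (\<lambda>(g, h). mult H g h)"
   and iH: "continuous_map (gtop H) (gtop H) (ginv H)" using tH by (simp_all add: topological_groupoid_def)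
  have mG: "continuous_map (subtopology (prod_topology (gtop G) (gtop G)) (composable G)) (gtop G) (\<lambda>(g, h). mult G g h)"
   and iG: "continuous_map (gtop G) (gtop G) (ginv G)" using tg by (simp_all add: topological_groupoid_def)
  define Z where "Z = subtopology (prod_topology P P) (composable T)"
  have tZ: "topspace Z = ((arr H \<times> arr G) \<times> (arr H \<times> arr G)) \<inter> composable T"
    by (simp add: Z_def top topH)
  have Zc: "continuous_map Z (prod_topology P P) id" unfolding Z_def
    by (simp add: continuous_map_from_subtopology)
  have ff: "continuous_map Z (gtop H) (\<lambda>z. fst (fst z))"
    using continuous_map_compose[OF Zc continuous_map_compose[OF continuous_map_fst continuous_map_fst]] by (simp add: o_def)
  have fs: "continuous_map Z (gtop H) (\<lambda>z. fst (snd z))"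
    using continuous_map_compose[OF Zc continuous_map_compose[OF continuous_map_snd continuous_map_fst]] by (simp add: o_def)
  have sf: "continuous_map Z (gtop G) (\<lambda>z. snd (fst z))"
    using continuous_map_compose[OF Zc continuous_map_compose[OF continuous_map_fst continuous_map_snd]] by (simp add: o_def)
  have ss: "continuous_map Z (gtop G) (\<lambda>z. snd (snd z))"
    using continuous_map_compose[OF Zc continuous_map_compose[OF continuous_map_snd continuous_map_snd]] by (simp add: o_def)
  have kc: "continuous_map Z (discrete_topology UNIV) (\<lambda>z. c (fst (fst z)))"
    using continuous_map_compose[OF ff cc] by (simp add: o_def)
  have Ac: "continuous_map Z (gtop G) (\<lambda>z. A (- c (fst (fst z))) (snd (snd z)))"
  proof -
    have "continuous_map Z (gtop G) (\<lambda>z. A (- n) (snd (snd z)))" for n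
      using continuous_map_compose[OF ss A_cont] by (simp add: o_def)
    then show ?thesis using cont_piecewise[OF kc, of "gtop G" "\<lambda>n z. A (- n) (snd (snd z))"] by simp
  qed
  have compT: "\<And>h1 g1 h2 g2. ((h1, g1), (h2, g2)) \<in> composable T \<Longrightarrow>
      h1 \<in> arr H \<and> g1 \<in> arr G \<and> h2 \<in> arr H \<and> g2 \<in> arr G \<and> src H h1 = rng H h2 \<and> A (c h1) (src G g1) = rng G g2"
    by (simp add: composable_def T_simps)
  have p1: "continuous_map Z (subtopology (prod_topology (gtop H) (gtop H)) (composable H)) (\<lambda>z. (fst (fst z), fst (snd z)))"
  proof -
    have "(\<lambda>z. (fst (fst z), fst (snd z))) \<in> topspace Z \<rightarrow> composable H"
    proof
      fix z assume "z \<in> topspace Z"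
      then obtain h1 g1 h2 g2 where "z = ((h1, g1), (h2, g2))" "((h1, g1), (h2, g2)) \<in> composable T"
        unfolding tZ by (metis IntD2 prod.collapse)
      then show "(fst (fst z), fst (snd z)) \<in> composable H" using compT by (auto simp: composable_def)
    qed
    then show ?thesis using ff fs by (simp add: continuous_map_in_subtopology continuous_map_pairedI)
  qed
  have p2: "continuous_map Z (subtopology (prod_topology (gtop G) (gtop G)) (composable G)) (\<lambda>z. (snd (fst z), A (- c (fst (fst z))) (snd (snd z))))"
  proof -
    have "(\<lambda>z. (snd (fst z), A (- c (fst (fst z))) (snd (snd z)))) \<in> topspace Z \<rightarrow> composable G"
    proof
      fix z assume "z \<in> topspace Z"
      then obtain h1 g1 h2 g2 where z: "z = ((h1, g1), (h2, g2))" "((h1, g1), (h2, g2)) \<in> composable T"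
        unfolding tZ by (metis IntD2 prod.collapse)
      then have a: "h1 \<in> arr H \<and> g1 \<in> arr G \<and> h2 \<in> arr H \<and> g2 \<in> arr G \<and> src H h1 = rng H h2 \<and> A (c h1) (src G g1) = rng G g2"
        using compT by blast
      have "src G g1 = rng G (A (- c h1) g2)"
        using a gp_src_arr[OF gG] by (simp flip: a[THEN conjunct2, THEN conjunct2, THEN conjunct2, THEN conjunct2, THEN conjunct2])
      then show "(snd (fst z), A (- c (fst (fst z))) (snd (snd z))) \<in> composable G"
        using a z by (simp add: composable_def)
    qed
    then show ?thesis using sf Ac by (simp add: continuous_map_in_subtopology continuous_map_pairedI)
  qed
  have m1: "continuous_map Z (gtop H) (\<lambda>z. mult H (fst (fst z)) (fst (snd z)))"
    using continuous_map_compose[OF p1 mH] by (simp add: o_def)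
  have m2: "continuous_map Z (gtop G) (\<lambda>z. mult G (snd (fst z)) (A (- c (fst (fst z))) (snd (snd z))))"
    using continuous_map_compose[OF p2 mG] by (simp add: o_def)
  have M: "continuous_map Z P (\<lambda>(x, y). mult T x y)"
  proof (rule continuous_map_eq[OF continuous_map_pairedI[OF m1 m2]])
    fix z show "(mult H (fst (fst z)) (fst (snd z)), mult G (snd (fst z)) (A (- c (fst (fst z))) (snd (snd z)))) =
        (\<lambda>(x, y). mult T x y) z"
      by (cases z; cases "fst z"; cases "snd z") (simp add: T_simps)
  qed
  have I1: "continuous_map P (gtop H) (\<lambda>z. ginv H (fst z))"
    using continuous_map_compose[OF continuous_map_fst iH] by (simp add: o_def)
  have kc2: "continuous_map P (discrete_topology UNIV) (\<lambda>z. c (fst z))"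
    using continuous_map_compose[OF continuous_map_fst cc] by (simp add: o_def)
  have I2: "continuous_map P (gtop G) (\<lambda>z. A (c (fst z)) (ginv G (snd z)))"
  proof -
    have "continuous_map P (gtop G) (\<lambda>z. A n (ginv G (snd z)))" for n
      using continuous_map_compose[OF continuous_map_compose[OF continuous_map_snd[of "gtop H" "gtop G"] iG] A_cont]
      by (simp add: o_def)
    then show ?thesis using cont_piecewise[OF kc2, of "gtop G" "\<lambda>n z. A n (ginv G (snd z))"] by simp
  qed
  have I: "continuous_map P P (ginv T)"
  proof (rule continuous_map_eq[OF continuous_map_pairedI[OF I1 I2]])
    fix z show "(ginv H (fst z), A (c (fst z)) (ginv G (snd z))) = ginv T z"
      by (cases z) (simp add: T_simps)
  qed
  show ?thesis unfolding topological_groupoid_def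
    using groupoid_T M I Z_def by (simp add: T_simps top topH)
qed

end

context tw2
begin

lemma etale_T: assumes eH: "etale H" and eG: "etale G" shows "etale T"
  unfolding etale_def
proof (intro ballI)
  fix z assume "z \<in> arr T"
  then obtain h g where z: "z = (h, g)" "h \<in> arr H" "g \<in> arr G" by (cases z) (simp add: T_simps)
  obtain U1 where U1: "openin (gtop H) U1" "h \<in> U1" "openin (subtopology (gtop H) (units H)) (rng H ` U1)"
     "homeomorphic_map (subtopology (gtop H) U1) (subtopology (gtop H) (rng H ` U1)) (rng H)"
    using eH z(2) unfolding etale_def by meson
  obtain U2 where U2: "openin (gtop G) U2" "g \<in> U2" "openin (subtopology (gtop G) (units G)) (rng G ` U2)"
     "homeomorphic_map (subtopology (gtop G) U2) (subtopology (gtop G) (rng G ` U2)) (rng G)"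
    using eG z(3) unfolding etale_def by meson
  note pp = piece_prod[OF U1(3) U1(4) U2(3) U2(4)]
  show "\<exists>U. openin (gtop T) U \<and> z \<in> U \<and> openin (subtopology (gtop T) (units T)) (rng T ` U) \<and>
      homeomorphic_map (subtopology (gtop T) U) (subtopology (gtop T) (rng T ` U)) (rng T)"
  proof (intro exI[of _ "U1 \<times> U2"] conjI)
    show "openin (gtop T) (U1 \<times> U2)" using U1(1) U2(1) by (simp add: T_simps openin_prod_Times_iff)
    show "z \<in> U1 \<times> U2" using z U1(2) U2(2) by simp
    show "openin (subtopology (gtop T) (units T)) (rng T ` (U1 \<times> U2))"
      using pp(1) by (simp only: T_simps rng_T)
    show "homeomorphic_map (subtopology (gtop T) (U1 \<times> U2)) (subtopology (gtop T) (rng T ` (U1 \<times> U2))) (rng T)"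
      using pp(2) by (simp only: T_simps rng_T)
  qed
qed

lemma ample_T:
  assumes cc: "continuous_map (gtop H) (discrete_topology UNIV) c" and aH: "ample H" and aG: "ample G"
  shows "ample T"
  unfolding ample_def
proof (intro allI impI ballI)
  fix V z assume V: "openin (gtop T) V" and zV: "z \<in> V"
  obtain h g where z: "z = (h, g)" by (cases z)
  have ex: "\<exists>U W. openin (gtop H) U \<and> openin (gtop G) W \<and> h \<in> U \<and> g \<in> W \<and> U \<times> W \<subseteq> V"
    using t2[of "gtop H" "gtop G" V h g] V zV z by (simp add: T_simps)
  then obtain U W where UW: "openin (gtop H) U" "openin (gtop G) W" "h \<in> U" "g \<in> W" "U \<times> W \<subseteq> V"
    by blast
  define U' where "U' = U \<inter> {x \<in> topspace (gtop H). c x \<in> {c h}}"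
  have oU': "openin (gtop H) U'" unfolding U'_def
    by (rule openin_Int[OF UW(1) openin_continuous_map_preimage[OF cc]]) simp
  have hU: "h \<in> topspace (gtop H)" using openin_subset[OF UW(1)] UW(3) by blast
  have hU': "h \<in> U'" unfolding U'_def using hU UW(3) by simp
  obtain B1 where B1: "open_bisection H B1" "compactin (gtop H) B1" "h \<in> B1" "B1 \<subseteq> U'"
    using aH oU' hU' unfolding ample_def by meson
  obtain B2 where B2: "open_bisection G B2" "compactin (gtop G) B2" "g \<in> B2" "B2 \<subseteq> W"
    using aG UW(2) UW(4) unfolding ample_def by meson
  define n where "n = c h"
  have cB1: "\<And>x. x \<in> B1 \<Longrightarrow> c x = n" using B1(4) unfolding U'_def n_def by auto
  have B1H: "B1 \<subseteq> arr H" using B1(4) topH unfolding U'_def by auto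
  have oB1: "openin (gtop H) B1" "openin (subtopology (gtop H) (units H)) (rng H ` B1)"
     "homeomorphic_map (subtopology (gtop H) B1) (subtopology (gtop H) (rng H ` B1)) (rng H)"
     "openin (subtopology (gtop H) (units H)) (src H ` B1)"
     "homeomorphic_map (subtopology (gtop H) B1) (subtopology (gtop H) (src H ` B1)) (src H)"
    using B1(1) unfolding open_bisection_def by auto
  have oB2: "openin (gtop G) B2" "openin (subtopology (gtop G) (units G)) (rng G ` B2)"
     "homeomorphic_map (subtopology (gtop G) B2) (subtopology (gtop G) (rng G ` B2)) (rng G)"
     "openin (subtopology (gtop G) (units G)) (src G ` B2)"
     "homeomorphic_map (subtopology (gtop G) B2) (subtopology (gtop G) (src G ` B2)) (src G)"
    using B2(1) unfolding open_bisection_def by auto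
  have B2G: "B2 \<subseteq> arr G" using openin_subset[OF oB2(1)] top by simp
  have sB2: "src G ` B2 \<subseteq> arr G" using B2G gp_src_arr[OF gG] by auto
  have sG2: "openin (subtopology (gtop G) (units G)) ((A n \<circ> src G) ` B2)"
    using A_open_units[OF oB2(4), of n] by (simp add: image_comp)
  have hG2: "homeomorphic_map (subtopology (gtop G) B2) (subtopology (gtop G) ((A n \<circ> src G) ` B2)) (A n \<circ> src G)"
    using homeomorphic_map_compose[OF oB2(5) A_sub_homeo[OF sB2, of n]] by (simp add: image_comp)
  note pr = piece_prod[OF oB1(2) oB1(3) oB2(2) oB2(3)]
  note ps = piece_prod[OF oB1(4) oB1(5) sG2 hG2]
  have eqs: "\<And>w. w \<in> B1 \<times> B2 \<Longrightarrow> (\<lambda>(x, y). (src H x, (A n \<circ> src G) y)) w = src T w"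
  proof -
    fix w assume "w \<in> B1 \<times> B2"
    then obtain x y where "w = (x, y)" "x \<in> B1" by blast
    then show "(\<lambda>(x, y). (src H x, (A n \<circ> src G) y)) w = src T w" using cB1 by (simp add: T_simps)
  qed
  have imgeq: "src T ` (B1 \<times> B2) = (\<lambda>(x, y). (src H x, (A n \<circ> src G) y)) ` (B1 \<times> B2)"
    by (rule image_cong[OF refl], rule eqs[symmetric])
  have ob: "open_bisection T (B1 \<times> B2)"
    unfolding open_bisection_def
  proof (intro conjI)
    show "openin (gtop T) (B1 \<times> B2)" using oB1(1) oB2(1) by (simp add: T_simps openin_prod_Times_iff)
    show "openin (subtopology (gtop T) (units T)) (rng T ` (B1 \<times> B2))"
      using pr(1) by (simp only: T_simps rng_T)
    show "homeomorphic_map (subtopology (gtop T) (B1 \<times> B2)) (subtopology (gtop T) (rng T ` (B1 \<times> B2))) (rng T)"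
      using pr(2) by (simp only: T_simps rng_T)
    show "openin (subtopology (gtop T) (units T)) (src T ` (B1 \<times> B2))"
      using ps(1) by (simp only: T_simps imgeq)
    show "homeomorphic_map (subtopology (gtop T) (B1 \<times> B2)) (subtopology (gtop T) (src T ` (B1 \<times> B2))) (src T)"
    proof (rule homeomorphic_map_eq)
      show "homeomorphic_map (subtopology (gtop T) (B1 \<times> B2)) (subtopology (gtop T) (src T ` (B1 \<times> B2)))
         (\<lambda>(x, y). (src H x, (A n \<circ> src G) y))"
        using ps(2) by (simp only: T_simps imgeq)
      fix w assume "w \<in> topspace (subtopology (gtop T) (B1 \<times> B2))"
      then have "w \<in> B1 \<times> B2" by simp
      then show "(\<lambda>(x, y). (src H x, (A n \<circ> src G) y)) w = src T w" by (rule eqs)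
    qed
  qed
  have cp: "compactin (gtop T) (B1 \<times> B2)" using B1(2) B2(2) by (simp add: T_simps compactin_Times)
  have zin: "z \<in> B1 \<times> B2" using z B1(3) B2(3) by simp
  have sub1: "B1 \<times> B2 \<subseteq> U \<times> W" using B1(4) B2(4) unfolding U'_def by auto
  have sub: "B1 \<times> B2 \<subseteq> V" using sub1 UW(5) by (rule subset_trans)
  show "\<exists>B. open_bisection T B \<and> compactin (gtop T) B \<and> z \<in> B \<and> B \<subseteq> V"
    using ob cp zin sub by (intro exI[of _ "B1 \<times> B2"]) simp
qed

end

theorem lemma3p2:
  fixes H :: "'h tgroupoid" and G :: "'g tgroupoid"
    and c :: "'h \<Rightarrow> int" and \<alpha> :: "'g \<Rightarrow> 'g"
  assumes "topological_groupoid H" "locally_compact_space (gtop H)"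
      "Hausdorff_space (gtop H)" "etale H"
    and "topological_groupoid G" "locally_compact_space (gtop G)"
      "Hausdorff_space (gtop G)" "etale G"
    and "cocycle H c" "continuous_map (gtop H) (discrete_topology UNIV) c"
    and "groupoid_automorphism G \<alpha>"
  shows "topological_groupoid (twisted_product H c \<alpha> G) \<and>
         locally_compact_space (gtop (twisted_product H c \<alpha> G)) \<and>
         Hausdorff_space (gtop (twisted_product H c \<alpha> G)) \<and>
         etale (twisted_product H c \<alpha> G) \<and>
         (second_countable (gtop H) \<and> second_countable (gtop G) \<longrightarrow>
            second_countable (gtop (twisted_product H c \<alpha> G))) \<and>
         (ample H \<and> ample G \<longrightarrow> ample (twisted_product H c \<alpha> G))"
proof -
  interpret tw2 G \<alpha> H c
    by unfold_locales (use assms in simp_all)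
  have g: "gtop (twisted_product H c \<alpha> G) = prod_topology (gtop H) (gtop G)" by (rule T_simps)
  show ?thesis
  proof (intro conjI impI)
    show "topological_groupoid (twisted_product H c \<alpha> G)" using top_T assms(10) by simp
    show "locally_compact_space (gtop (twisted_product H c \<alpha> G))"
      unfolding g using assms(2,6) locally_compact_space_prod_topology by blast
    show "Hausdorff_space (gtop (twisted_product H c \<alpha> G))"
      unfolding g using assms(3,7) Hausdorff_space_prod_topology by blast
    show "etale (twisted_product H c \<alpha> G)" using etale_T assms(4,8) by simp
    show "second_countable (gtop (twisted_product H c \<alpha> G))"
      if "second_countable (gtop H) \<and> second_countable (gtop G)"
      unfolding g using that second_countable_prod by blast
    show "ample (twisted_product H c \<alpha> G)" if "ample H \<and> ample G"
      using ample_T assms(10) that by simp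
  qed
qed


end
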